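(* Let $H_0$ be an admissible Hamiltonian, $H_1(x)=\tfrac12x^TA\mathcal Hx$ (so $\nabla H_1=A\nabla H_0$), $f_0=J\nabla H_0$ and $f_1=J\nabla H_1$ (so $f_1=A^Tf_0$). Then for all $x$: $$f_0'(x)f_1(x)=f_1'(x)f_0(x),\qquad f_0'(x)f_1'(x)=f_1'(x)f_0'(x).$$
   Context: Fix an integer $n\ge 2$. Points of $\mathbb R^{2n}$ are $x=(x_1,\dots,x_{2n})^{T}$; write $u=(x_1,\dots,x_n)^T$. Let $X(u)$ be the $n\times n$ matrix with entries $X(u)_{ij}=x_{k}$ where $k\in\{1,\dots,n\}$, $k\equiv i+j-1 \pmod n$, and let $J(x)=\begin{pmatrix}0&X(u)\\-X(u)&0\end{pmatrix}$. Let $\mathcal P$ be the $n\times n$ cyclic shift matrix ($\mathcal P_{i,i+1}=1$ for $1\le i\le n-1$, $\mathcal P_{n,1}=1$, all other entries $0$) and $A=\begin{pmatrix}\mathcal P&0\\0&\mathcal P\end{pmatrix}$. An admissible Hamiltonian is a homogeneous quadratic form $H(x)=\tfrac12 x^T\mathcal H x$ with a constant symmetric matrix $\mathcal H=\nabla^2H$ satisfying $A\mathcal H=\mathcal H A^T$; $f'(x)$ denotes the Jacobi matrix of a vector field $f$. *)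

theory Defs
  imports "HOL-Analysis.Analysis"
begin

text \<open>Conventions: indices are 0-based. A point of R^(2n) is a function
  x :: nat \<Rightarrow> real whose relevant components are x 0, ..., x (2n-1)
  (paper's x_(k+1) is x k). Matrices are functions nat \<Rightarrow> nat \<Rightarrow> real,
  relevant entries with indices < n (resp. < 2n).\<close>

definition matmul :: "nat \<Rightarrow> (nat \<Rightarrow> nat \<Rightarrow> real) \<Rightarrow> (nat \<Rightarrow> nat \<Rightarrow> real) \<Rightarrow> (nat \<Rightarrow> nat \<Rightarrow> real)" where
  "matmul m M N = (\<lambda>i k. \<Sum>j<m. M i j * N j k)"

definition matvec :: "nat \<Rightarrow> (nat \<Rightarrow> nat \<Rightarrow> real) \<Rightarrow> (nat \<Rightarrow> real) \<Rightarrow> (nat \<Rightarrow> real)" where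
  "matvec m M v = (\<lambda>i. \<Sum>j<m. M i j * v j)"

definition transp :: "(nat \<Rightarrow> nat \<Rightarrow> real) \<Rightarrow> (nat \<Rightarrow> nat \<Rightarrow> real)" where
  "transp M = (\<lambda>i j. M j i)"

text \<open>X(u)_{ij} = x_k with k = i+j-1 mod n (1-based), i.e. 0-based index (i+j) mod n.\<close>
definition Xmat :: "nat \<Rightarrow> (nat \<Rightarrow> real) \<Rightarrow> (nat \<Rightarrow> nat \<Rightarrow> real)" where
  "Xmat n x = (\<lambda>i j. x ((i + j) mod n))"

definition Jmat :: "nat \<Rightarrow> (nat \<Rightarrow> real) \<Rightarrow> (nat \<Rightarrow> nat \<Rightarrow> real)" where
  "Jmat n x = (\<lambda>i j.
     if i < n \<and> n \<le> j \<and> j < 2*n then Xmat n x i (j - n)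
     else if n \<le> i \<and> i < 2*n \<and> j < n then - Xmat n x (i - n) j
     else 0)"

definition Pmat :: "nat \<Rightarrow> (nat \<Rightarrow> nat \<Rightarrow> real)" where
  "Pmat n = (\<lambda>i j. if i < n \<and> j < n \<and> j = (i + 1) mod n then 1 else 0)"

definition Amat :: "nat \<Rightarrow> (nat \<Rightarrow> nat \<Rightarrow> real)" where
  "Amat n = (\<lambda>i j.
     if i < n \<and> j < n then Pmat n i j
     else if n \<le> i \<and> i < 2*n \<and> n \<le> j \<and> j < 2*n then Pmat n (i - n) (j - n)
     else 0)"

definition admissible :: "nat \<Rightarrow> (nat \<Rightarrow> nat \<Rightarrow> real) \<Rightarrow> bool" where
  "admissible n HH \<longleftrightarrow>
     (\<forall>i<2*n. \<forall>j<2*n. HH i j = HH j i) \<and>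
     (\<forall>i<2*n. \<forall>j<2*n. matmul (2*n) (Amat n) HH i j = matmul (2*n) HH (transp (Amat n)) i j)"

definition quadH :: "nat \<Rightarrow> (nat \<Rightarrow> nat \<Rightarrow> real) \<Rightarrow> (nat \<Rightarrow> real) \<Rightarrow> real" where
  "quadH m M x = (1/2) * (\<Sum>i<m. \<Sum>j<m. x i * M i j * x j)"

definition pderiv :: "((nat \<Rightarrow> real) \<Rightarrow> real) \<Rightarrow> nat \<Rightarrow> (nat \<Rightarrow> real) \<Rightarrow> real" where
  "pderiv g j x = deriv (\<lambda>t. g (x(j := t))) (x j)"

definition grad :: "((nat \<Rightarrow> real) \<Rightarrow> real) \<Rightarrow> (nat \<Rightarrow> real) \<Rightarrow> (nat \<Rightarrow> real)" where
  "grad g x = (\<lambda>j. pderiv g j x)"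

definition jacobi :: "((nat \<Rightarrow> real) \<Rightarrow> (nat \<Rightarrow> real)) \<Rightarrow> (nat \<Rightarrow> real) \<Rightarrow> (nat \<Rightarrow> nat \<Rightarrow> real)" where
  "jacobi f x = (\<lambda>i j. pderiv (\<lambda>y. f y i) j x)"

definition hamfield :: "nat \<Rightarrow> ((nat \<Rightarrow> real) \<Rightarrow> real) \<Rightarrow> (nat \<Rightarrow> real) \<Rightarrow> (nat \<Rightarrow> real)" where
  "hamfield n H x = matvec (2*n) (Jmat n x) (grad H x)"

end

theory Submission imports Defs begin

lemma upd_deriv: "((\<lambda>t. (x(j:=t)) a) has_field_derivative (if a = j then 1 else 0)) (at s)"
  by (cases "a = j") (auto intro!: derivative_eq_intros)

lemma pderiv_quad:
  assumes "finite I" "finite K"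
  shows "pderiv (\<lambda>y. \<Sum>i\<in>I. \<Sum>k\<in>K. c i k * y (a i k) * y (b i k)) j x =
    (\<Sum>i\<in>I. \<Sum>k\<in>K. c i k * ((if a i k = j then 1 else 0) * x (b i k) + x (a i k) * (if b i k = j then 1 else 0)))"
proof -
  have "((\<lambda>t. \<Sum>i\<in>I. \<Sum>k\<in>K. c i k * (x(j:=t)) (a i k) * (x(j:=t)) (b i k)) has_field_derivative
     (\<Sum>i\<in>I. \<Sum>k\<in>K. c i k * ((if a i k = j then 1 else 0) * (x(j:=s)) (b i k) + (x(j:=s)) (a i k) * (if b i k = j then 1 else 0)))) (at s)" for s
    apply (intro DERIV_sum)
    apply (rule DERIV_cong)
     apply (rule DERIV_mult[OF DERIV_cmult[OF upd_deriv] upd_deriv])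
    apply (simp add: algebra_simps)
    done
  from this[of "x j"] show ?thesis
    unfolding pderiv_def by (intro DERIV_imp_deriv) simp
qed


definition sJ :: "nat \<Rightarrow> nat \<Rightarrow> nat \<Rightarrow> real" where
  "sJ n i k = (if i < n \<and> n \<le> k \<and> k < 2*n then 1 else if n \<le> i \<and> i < 2*n \<and> k < n then -1 else 0)"
definition mJ :: "nat \<Rightarrow> nat \<Rightarrow> nat \<Rightarrow> nat" where
  "mJ n i k = (if i < n \<and> n \<le> k \<and> k < 2*n then (i + (k - n)) mod n else (i - n + k) mod n)"

lemma Jmat_sJ: "Jmat n y i k = sJ n i k * y (mJ n i k)"
  unfolding Jmat_def Xmat_def sJ_def mJ_def by auto

lemma mJ_lt: "0 < n \<Longrightarrow> mJ n i k < n"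
  unfolding mJ_def by auto

lemma grad_quad:
  assumes sym: "\<forall>i<m. \<forall>j<m. M i j = M j i" and k: "k < m"
  shows "grad (quadH m M) y k = (\<Sum>l<m. M k l * y l)"
proof -
  have q: "quadH m M = (\<lambda>y. \<Sum>i<m. \<Sum>j<m. (M i j / 2) * y i * y j)"
    unfolding quadH_def by (auto simp: sum_distrib_left intro!: ext sum.cong)
  have "grad (quadH m M) y k = (\<Sum>i<m. \<Sum>j<m. M i j / 2 * ((if i = k then 1 else 0) * y j + y i * (if j = k then 1 else 0)))"
    unfolding grad_def q by (rule pderiv_quad) auto
  also have "\<dots> = (\<Sum>i<m. \<Sum>j<m. (if i = k then M i j / 2 * y j else 0)) + (\<Sum>i<m. \<Sum>j<m. (if j = k then M i j / 2 * y i else 0))"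
  proof -
    have "\<And>i j. M i j / 2 * ((if i = k then 1 else 0) * y j + y i * (if j = k then 1 else 0)) = (if i = k then M i j / 2 * y j else 0) + (if j = k then M i j / 2 * y i else 0)"
      by (simp add: algebra_simps)
    then show ?thesis by (simp only: sum.distrib)
  qed
  also have "\<dots> = (\<Sum>j<m. M k j / 2 * y j) + (\<Sum>i<m. M i k / 2 * y i)"
    using k by (simp add: sum.delta' sum.swap[of _ "{..<m}" "{..<m}"] if_distrib cong: if_cong)
  also have "(\<Sum>i<m. M i k / 2 * y i) = (\<Sum>j<m. M k j / 2 * y j)"
    using sym k by (intro sum.cong) auto
  finally have "grad (quadH m M) y k = (\<Sum>j<m. M k j / 2 * y j) + (\<Sum>j<m. M k j / 2 * y j)" .
  also have "\<dots> = (\<Sum>l<m. M k l * y l)" by (simp add: sum.distrib[symmetric] mult.commute)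
  finally show ?thesis .
qed


lemma ham_formula:
  assumes sym: "\<forall>i<2*n. \<forall>j<2*n. M i j = M j i"
  shows "hamfield n (quadH (2*n) M) y i = matvec (2*n) (Jmat n y) (matvec (2*n) M y) i"
  unfolding hamfield_def matvec_def using grad_quad[OF sym] by (auto intro!: sum.cong)

lemma ham_formula2:
  assumes sym: "\<forall>i<2*n. \<forall>j<2*n. M i j = M j i"
  shows "(\<lambda>y. hamfield n (quadH (2*n) M) y i) = (\<lambda>y. \<Sum>k<2*n. \<Sum>l<2*n. (sJ n i k * M k l) * y (mJ n i k) * y l)"
  unfolding ham_formula[OF sym] matvec_def Jmat_sJ
  by (auto simp: sum_distrib_left algebra_simps intro!: ext sum.cong)

lemma delta_sum: assumes "a < (m::nat)" shows "(\<Sum>j<m. (if a = j then 1 else 0) * (w j::real)) = w a"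
proof -
  have "(\<Sum>j<m. (if a = j then 1 else 0) * (w j::real)) = (\<Sum>j<m. (if a = j then w a else 0))"
    by (rule sum.cong) auto
  also have "\<dots> = w a" using sum.delta'[of "{..<m}" a "\<lambda>_. w a"] assms by simp
  finally show ?thesis .
qed

lemma swap3: "(\<Sum>j\<in>A. \<Sum>k\<in>B. \<Sum>l\<in>C. f j k l) = (\<Sum>k\<in>B. \<Sum>l\<in>C. \<Sum>j\<in>A. f j k l)"
proof -
  have "(\<Sum>j\<in>A. \<Sum>k\<in>B. \<Sum>l\<in>C. f j k l) = (\<Sum>k\<in>B. \<Sum>j\<in>A. \<Sum>l\<in>C. f j k l)" by (rule sum.swap)
  also have "\<dots> = (\<Sum>k\<in>B. \<Sum>l\<in>C. \<Sum>j\<in>A. f j k l)" by (rule sum.cong[OF refl], rule sum.swap)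
  finally show ?thesis .
qed

lemma ham_jac:
  assumes sym: "\<forall>i<2*n. \<forall>j<2*n. M i j = M j i" and n: "0 < n"
  shows "matvec (2*n) (jacobi (hamfield n (quadH (2*n) M)) x) w i =
    matvec (2*n) (Jmat n w) (matvec (2*n) M x) i + matvec (2*n) (Jmat n x) (matvec (2*n) M w) i"
proof -
  let ?c = "\<lambda>k l. sJ n i k * M k l"
  have jac: "jacobi (hamfield n (quadH (2*n) M)) x i j = (\<Sum>k<2*n. \<Sum>l<2*n. ?c k l *
      ((if mJ n i k = j then 1 else 0) * x l + x (mJ n i k) * (if l = j then 1 else 0)))" for j
    unfolding jacobi_def ham_formula2[OF sym] by (rule pderiv_quad) auto
  have m2: "mJ n i k < 2*n" for k using mJ_lt[OF n, of i k] by linarith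
  have "matvec (2*n) (jacobi (hamfield n (quadH (2*n) M)) x) w i =
     (\<Sum>j<2*n. \<Sum>k<2*n. \<Sum>l<2*n. ?c k l *
      ((if mJ n i k = j then 1 else 0) * x l + x (mJ n i k) * (if l = j then 1 else 0)) * w j)"
    unfolding matvec_def jac by (simp add: sum_distrib_right)
  also have "\<dots> = (\<Sum>k<2*n. \<Sum>l<2*n. \<Sum>j<2*n. ?c k l *
      ((if mJ n i k = j then 1 else 0) * x l + x (mJ n i k) * (if l = j then 1 else 0)) * w j)"
    by (rule swap3)
  also have "\<dots> = (\<Sum>k<2*n. \<Sum>l<2*n. ?c k l * (x l * w (mJ n i k) + x (mJ n i k) * w l))"
  proof (intro sum.cong refl)
    fix k l assume "l \<in> {..<2*n}"
    then have l: "l < 2*n" by simp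
    have "(\<Sum>j<2*n. ?c k l * ((if mJ n i k = j then 1 else 0) * x l + x (mJ n i k) * (if l = j then 1 else 0)) * w j)
      = ?c k l * (x l * (\<Sum>j<2*n. (if mJ n i k = j then 1 else 0) * w j) + x (mJ n i k) * (\<Sum>j<2*n. (if l = j then 1 else 0) * w j))"
      by (simp add: sum_distrib_left sum.distrib algebra_simps)
    also have "\<dots> = ?c k l * (x l * w (mJ n i k) + x (mJ n i k) * w l)"
      using delta_sum[OF m2] delta_sum[OF l] by simp
    finally show "(\<Sum>j<2*n. ?c k l * ((if mJ n i k = j then 1 else 0) * x l + x (mJ n i k) * (if l = j then 1 else 0)) * w j)
      = ?c k l * (x l * w (mJ n i k) + x (mJ n i k) * w l)" .
  qed
  also have "\<dots> = matvec (2*n) (Jmat n w) (matvec (2*n) M x) i + matvec (2*n) (Jmat n x) (matvec (2*n) M w) i"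
    unfolding matvec_def Jmat_sJ
    by (simp add: sum_distrib_left sum.distrib[symmetric] algebra_simps)
  finally show ?thesis .
qed


lemma split2: "(\<Sum>j<2*n. f j) = (\<Sum>k<n. f k) + (\<Sum>k<n. f (n+k::nat))"
proof -
  have u: "{..<2*n} = {..<n} \<union> {n..<2*n}" by auto
  have i: "{n..<2*n} = (\<lambda>k. n+k) ` {..<n}"
  proof (auto simp: image_iff)
    fix x assume "n \<le> x" "x < 2*n" then show "\<exists>xa\<in>{..<n}. x = n + xa" by (intro bexI[of _ "x - n"]) auto
  qed
  have "(\<Sum>j<2*n. f j) = (\<Sum>k<n. f k) + (\<Sum>j\<in>{n..<2*n}. f j)"
    unfolding u by (rule sum.union_disjoint) auto
  also have "(\<Sum>j\<in>{n..<2*n}. f j) = (\<Sum>k<n. f (n+k))"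
    unfolding i by (subst sum.reindex) (auto simp: inj_on_def)
  finally show ?thesis .
qed

lemma rot: assumes "0 < (n::nat)" shows "(\<Sum>k<n. g ((k+1) mod n)) = (\<Sum>k<n. g k)"
proof (cases n)
  case (Suc m)
  have "(\<Sum>k<Suc m. g ((k+1) mod Suc m)) = (\<Sum>k<m. g ((k+1) mod Suc m)) + g 0"
    by (simp add: sum.lessThan_Suc)
  also have "(\<Sum>k<m. g ((k+1) mod Suc m)) = (\<Sum>k<m. g (Suc k))"
    by (rule sum.cong) auto
  also have "(\<Sum>k<m. g (Suc k)) + g 0 = (\<Sum>k<Suc m. g k)"
    by (subst sum.lessThan_Suc_shift) (simp add: add.commute)
  finally show ?thesis using Suc by simp
qed (use assms in simp)

lemma predmod: "0 < (n::nat) \<Longrightarrow> i < n \<Longrightarrow> (i + (n - 1)) mod n = (if i = 0 then n - 1 else i - 1)"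
proof (cases "i = 0")
  case False
  assume "i < n" "0 < n"
  then have "i + (n - 1) = (i - 1) + n" using False by arith
  then have "(i + (n - 1)) mod n = ((i - 1) + n) mod n" by simp
  also have "\<dots> = i - 1" using \<open>i < n\<close> by simp
  finally show ?thesis using False by simp
qed simp

lemma sucmod: assumes "j < n" shows "(j + 1) mod n = (if j + 1 = n then 0 else j + (1::nat))"
proof (cases "j + 1 = n")
  case False
  then have "j + 1 < n" using assms by linarith
  then show ?thesis using False by simp
qed simp

lemma predmod_iff: "0 < (n::nat) \<Longrightarrow> i < n \<Longrightarrow> j < n \<Longrightarrow> (i = (j+1) mod n) = (j = (i + (n - 1)) mod n)"
  apply (simp only: predmod sucmod)
  apply (cases "j + 1 = n"; cases "i = 0")
     apply (simp_all only: if_True if_False simp_thms)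
     apply arith+
  done

lemma modlt2: "0 < n \<Longrightarrow> (a::nat) mod n < 2 * n"
  using mod_less_divisor[of n a] by linarith

lemma single: "t < m \<Longrightarrow> (\<And>j. j < m \<Longrightarrow> M j = (if t = j then 1 else 0)) \<Longrightarrow> (\<Sum>j<(m::nat). M j * v j) = (v t::real)"
proof -
  assume t: "t < m" and M: "\<And>j. j < m \<Longrightarrow> M j = (if t = j then 1 else 0)"
  have "(\<Sum>j<m. M j * v j) = (\<Sum>j<m. (if t = j then 1 else 0) * v j)"
    by (rule sum.cong) (simp_all add: M)
  also have "\<dots> = v t" by (rule delta_sum[OF t])
  finally show ?thesis .
qed

context fixes n :: nat assumes n: "0 < n" begin

lemma Av_lo: "i < n \<Longrightarrow> matvec (2*n) (Amat n) v i = v ((i+1) mod n)"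
  unfolding matvec_def
  by (rule single) (use n in \<open>auto simp: Amat_def Pmat_def modlt2\<close>)

lemma Av_hi: "n \<le> i \<Longrightarrow> i < 2*n \<Longrightarrow> matvec (2*n) (Amat n) v i = v (n + (i - n + 1) mod n)"
  unfolding matvec_def
  apply (rule single)
  using n apply simp
  apply (auto simp: Amat_def Pmat_def)
  done

lemma ATv_lo: assumes i: "i < n" shows "matvec (2*n) (transp (Amat n)) v i = v ((i + (n - 1)) mod n)"
  unfolding matvec_def transp_def
proof (rule single)
  show "(i + (n - 1)) mod n < 2 * n" using modlt2[OF n] .
  fix j assume j: "j < 2*n"
  show "Amat n j i = (if (i + (n - 1)) mod n = j then 1 else 0)"
  proof (cases "j < n")
    case True
    then show ?thesis using predmod_iff[OF n i True] i by (auto simp: Amat_def Pmat_def)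
  next
    case False
    then show ?thesis using i mod_less_divisor[OF n, of "i + (n - 1)"] by (auto simp: Amat_def Pmat_def)
  qed
qed

lemma ATv_hi: assumes i: "n \<le> i" "i < 2*n" shows "matvec (2*n) (transp (Amat n)) v i = v (n + (i - n + (n - 1)) mod n)"
  unfolding matvec_def transp_def
proof (rule single)
  show "n + (i - n + (n - 1)) mod n < 2 * n" using mod_less_divisor[OF n, of "i - n + (n - 1)"] by linarith
  fix j assume j: "j < 2*n"
  have i': "i - n < n" using i by linarith
  show "Amat n j i = (if n + (i - n + (n - 1)) mod n = j then 1 else 0)"
  proof (cases "j < n")
    case True
    then show ?thesis using i by (auto simp: Amat_def Pmat_def)
  next
    case False
    then have j': "j - n < n" using j by linarith
    have "(i - n = (j - n + 1) mod n) = (j - n = (i - n + (n - 1)) mod n)" by (rule predmod_iff[OF n i' j'])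
    moreover have "(n + (i - n + (n - 1)) mod n = j) = (j - n = (i - n + (n - 1)) mod n)" using False by auto
    ultimately show ?thesis using False i j by (auto simp: Amat_def Pmat_def)
  qed
qed

lemma Jv_lo: "i < n \<Longrightarrow> matvec (2*n) (Jmat n x) v i = (\<Sum>k<n. x ((i + k) mod n) * v (n + k))"
  unfolding matvec_def split2 by (simp add: Jmat_def Xmat_def)

lemma Jv_hi: "n \<le> i \<Longrightarrow> i < 2*n \<Longrightarrow> matvec (2*n) (Jmat n x) v i = - (\<Sum>k<n. x ((i - n + k) mod n) * v k)"
  unfolding matvec_def split2 by (simp add: Jmat_def Xmat_def sum_negf)

end

lemma modeq1: "0 < (n::nat) \<Longrightarrow> ((i + (n - 1)) mod n + (k + 1) mod n) mod n = (i + k) mod n"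
proof -
  assume n: "0 < n"
  have "((i + (n - 1)) mod n + (k + 1) mod n) mod n = (i + (n - 1) + (k + 1)) mod n" by (simp add: mod_add_eq)
  also have "i + (n - 1) + (k + 1) = (i + k) + n" using n by simp
  finally show ?thesis by simp
qed

context fixes n :: nat assumes n: "0 < n" begin

lemma JA: assumes i: "i < 2*n"
  shows "matvec (2*n) (Jmat n x) (matvec (2*n) (Amat n) v) i = matvec (2*n) (transp (Amat n)) (matvec (2*n) (Jmat n x) v) i"
proof (cases "i < n")
  case True
  have "matvec (2*n) (Jmat n x) (matvec (2*n) (Amat n) v) i = (\<Sum>k<n. x ((i + k) mod n) * v (n + (k + 1) mod n))"
    using Jv_lo[OF n True] Av_hi[OF n] by simp
  also have "\<dots> = (\<Sum>k<n. x (((i + (n - 1)) mod n + (k + 1) mod n) mod n) * v (n + (k + 1) mod n))"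
    by (simp only: modeq1[OF n])
  also have "\<dots> = (\<Sum>k<n. x (((i + (n - 1)) mod n + k) mod n) * v (n + k))"
    by (rule rot[OF n, of "\<lambda>k. x (((i + (n - 1)) mod n + k) mod n) * v (n + k)"])
  also have "\<dots> = matvec (2*n) (transp (Amat n)) (matvec (2*n) (Jmat n x) v) i"
    using ATv_lo[OF n True] Jv_lo[OF n] mod_less_divisor[OF n] by simp
  finally show ?thesis .
next
  case False
  have "matvec (2*n) (Jmat n x) (matvec (2*n) (Amat n) v) i = - (\<Sum>k<n. x ((i - n + k) mod n) * v ((k + 1) mod n))"
    using Jv_hi[OF n _ i] False Av_lo[OF n] by simp
  also have "\<dots> = - (\<Sum>k<n. x (((i - n + (n - 1)) mod n + (k + 1) mod n) mod n) * v ((k + 1) mod n))"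
    by (simp only: modeq1[OF n])
  also have "\<dots> = - (\<Sum>k<n. x (((i - n + (n - 1)) mod n + k) mod n) * v k)"
    using rot[OF n, of "\<lambda>k. x (((i - n + (n - 1)) mod n + k) mod n) * v k"] by simp
  also have "\<dots> = matvec (2*n) (transp (Amat n)) (matvec (2*n) (Jmat n x) v) i"
    using ATv_hi[OF n _ i] False Jv_hi[OF n] mod_less_divisor[OF n] by simp
  finally show ?thesis .
qed

lemma JAT: assumes i: "i < 2*n"
  shows "matvec (2*n) (Jmat n (matvec (2*n) (transp (Amat n)) w)) v i = matvec (2*n) (transp (Amat n)) (matvec (2*n) (Jmat n w) v) i"
proof (cases "i < n")
  case True
  have "matvec (2*n) (Jmat n (matvec (2*n) (transp (Amat n)) w)) v i = (\<Sum>k<n. w (((i + k) mod n + (n - 1)) mod n) * v (n + k))"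
    using Jv_lo[OF n True] ATv_lo[OF n] mod_less_divisor[OF n] by simp
  also have "\<dots> = (\<Sum>k<n. w (((i + (n - 1)) mod n + k) mod n) * v (n + k))"
    by (simp only: mod_add_left_eq mod_add_right_eq add_ac)
  also have "\<dots> = matvec (2*n) (transp (Amat n)) (matvec (2*n) (Jmat n w) v) i"
    using ATv_lo[OF n True] Jv_lo[OF n] mod_less_divisor[OF n] by simp
  finally show ?thesis .
next
  case False
  have "matvec (2*n) (Jmat n (matvec (2*n) (transp (Amat n)) w)) v i = - (\<Sum>k<n. w (((i - n + k) mod n + (n - 1)) mod n) * v k)"
    using Jv_hi[OF n _ i] False ATv_lo[OF n] mod_less_divisor[OF n] by simp
  also have "\<dots> = - (\<Sum>k<n. w (((i - n + (n - 1)) mod n + k) mod n) * v k)"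
    by (simp only: mod_add_left_eq mod_add_right_eq add_ac)
  also have "\<dots> = matvec (2*n) (transp (Amat n)) (matvec (2*n) (Jmat n w) v) i"
    using ATv_hi[OF n _ i] False Jv_hi[OF n] mod_less_divisor[OF n] by simp
  finally show ?thesis .
qed

end

lemma assoc: "matvec m M (matvec m N w) i = matvec m (matmul m M N) w i"
proof -
  have "matvec m M (matvec m N w) i = (\<Sum>j<m. \<Sum>l<m. M i j * N j l * w l)"
    unfolding matvec_def by (simp add: sum_distrib_left mult.assoc)
  also have "\<dots> = (\<Sum>l<m. \<Sum>j<m. M i j * N j l * w l)" by (rule sum.swap)
  also have "\<dots> = matvec m (matmul m M N) w i"
    unfolding matvec_def matmul_def by (simp add: sum_distrib_right)
  finally show ?thesis .
qed

lemma matvec_cong: "(\<And>j. j < m \<Longrightarrow> v j = v' j) \<Longrightarrow> matvec m M v i = matvec m M v' i"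
  unfolding matvec_def by (auto intro!: sum.cong)

lemma matvec_add: "matvec m M (\<lambda>j. a j + b j) i = matvec m M a i + matvec m M b i"
  unfolding matvec_def by (simp add: algebra_simps sum.distrib)

lemma matmul_col: "matmul m P Q i k = matvec m P (\<lambda>j. Q j k) i"
  unfolding matmul_def matvec_def ..

lemma col_unit: "k < m \<Longrightarrow> matvec m M (\<lambda>l. if l = k then 1 else 0) j = M j k"
  unfolding matvec_def using delta_sum[of k m "\<lambda>l. M j l"] by (simp add: mult.commute eq_commute)


theorem mainTheorem14:
  fixes n :: nat and HH :: "nat \<Rightarrow> nat \<Rightarrow> real" and x :: "nat \<Rightarrow> real"
  assumes "n \<ge> 2"
    and "admissible n HH"
  defines "H0 \<equiv> quadH (2*n) HH"
    and "H1 \<equiv> quadH (2*n) (matmul (2*n) (Amat n) HH)"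
  defines "f0 \<equiv> hamfield n H0"
    and "f1 \<equiv> hamfield n H1"
  shows "(\<forall>i<2*n. matvec (2*n) (jacobi f0 x) (f1 x) i = matvec (2*n) (jacobi f1 x) (f0 x) i)
     \<and> (\<forall>i<2*n. \<forall>k<2*n.
           matmul (2*n) (jacobi f0 x) (jacobi f1 x) i k = matmul (2*n) (jacobi f1 x) (jacobi f0 x) i k)"
proof -
  have n: "0 < n" using assms(1) by simp
  let ?m = "2*n"
  let ?A = "Amat n" and ?AT = "transp (Amat n)" and ?G = "HH" and ?AG = "matmul (2*n) (Amat n) HH"
  have symG: "\<forall>i<2*n. \<forall>j<2*n. ?G i j = ?G j i" using assms(2) unfolding admissible_def by blast
  have comm: "\<And>i j. i < 2*n \<Longrightarrow> j < 2*n \<Longrightarrow> ?AG i j = matmul (2*n) ?G ?AT i j"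
    using assms(2) unfolding admissible_def by blast
  have symAG: "\<forall>i<2*n. \<forall>j<2*n. ?AG i j = ?AG j i"
  proof (intro allI impI)
    fix i j assume ij: "i < 2*n" "j < 2*n"
    have "?AG i j = matmul (2*n) ?G ?AT i j" using comm ij by blast
    also have "\<dots> = ?AG j i" unfolding matmul_def transp_def
    proof (rule sum.cong[OF refl])
      fix l assume "l \<in> {..<2*n}"
      then have "?G i l = ?G l i" using symG ij by simp
      then show "?G i l * Amat n j l = Amat n j l * ?G l i" by simp
    qed
    finally show "?AG i j = ?AG j i" .
  qed
  define F0 where "F0 w = matvec ?m (jacobi f0 x) w" for w
  define F1 where "F1 w = matvec ?m (jacobi f1 x) w" for w
  have F0cong: "F0 v i = F0 v' i" if "\<And>j. j < ?m \<Longrightarrow> v j = v' j" for v v' i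
    unfolding F0_def by (rule matvec_cong) (rule that)
  have F0: "F0 w i = matvec ?m (Jmat n w) (matvec ?m ?G x) i + matvec ?m (Jmat n x) (matvec ?m ?G w) i" for w i
    unfolding F0_def f0_def H0_def by (rule ham_jac[OF symG n])
  have F1: "F1 w i = matvec ?m (Jmat n w) (matvec ?m ?AG x) i + matvec ?m (Jmat n x) (matvec ?m ?AG w) i" for w i
    unfolding F1_def f1_def H1_def by (rule ham_jac[OF symAG n])
  have GAT: "matvec ?m ?G (matvec ?m ?AT w) j = matvec ?m ?A (matvec ?m ?G w) j" if "j < ?m" for w j
  proof -
    have "matvec ?m ?G (matvec ?m ?AT w) j = matvec ?m (matmul ?m ?G ?AT) w j" by (rule assoc)
    also have "\<dots> = matvec ?m ?AG w j" unfolding matvec_def using comm that by (auto intro!: sum.cong)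
    also have "\<dots> = matvec ?m ?A (matvec ?m ?G w) j" by (rule assoc[symmetric])
    finally show ?thesis .
  qed
  have AGv: "matvec ?m ?AG v j = matvec ?m ?A (matvec ?m ?G v) j" for v j
    by (rule assoc[symmetric])
  have F1A: "F1 w i = matvec ?m ?AT (F0 w) i" if i: "i < ?m" for w i
  proof -
    have "F1 w i = matvec ?m (Jmat n w) (matvec ?m ?A (matvec ?m ?G x)) i + matvec ?m (Jmat n x) (matvec ?m ?A (matvec ?m ?G w)) i"
      unfolding F1 by (intro arg_cong2[where f="(+)"] matvec_cong AGv)
    also have "\<dots> = matvec ?m ?AT (matvec ?m (Jmat n w) (matvec ?m ?G x)) i + matvec ?m ?AT (matvec ?m (Jmat n x) (matvec ?m ?G w)) i"
      by (simp only: JA[OF n i])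
    also have "\<dots> = matvec ?m ?AT (F0 w) i"
      unfolding F0 matvec_add ..
    finally show ?thesis .
  qed
  have F0AT: "F0 (matvec ?m ?AT w) i = matvec ?m ?AT (F0 w) i" if i: "i < ?m" for w i
  proof -
    have "F0 (matvec ?m ?AT w) i = matvec ?m (Jmat n (matvec ?m ?AT w)) (matvec ?m ?G x) i
       + matvec ?m (Jmat n x) (matvec ?m ?A (matvec ?m ?G w)) i"
      unfolding F0 by (intro arg_cong2[where f="(+)"] refl matvec_cong GAT)
    also have "\<dots> = matvec ?m ?AT (matvec ?m (Jmat n w) (matvec ?m ?G x)) i + matvec ?m ?AT (matvec ?m (Jmat n x) (matvec ?m ?G w)) i"
      by (simp only: JA[OF n i] JAT[OF n i])
    also have "\<dots> = matvec ?m ?AT (F0 w) i"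
      unfolding F0 matvec_add ..
    finally show ?thesis .
  qed
  have f0: "f0 x j = matvec ?m (Jmat n x) (matvec ?m ?G x) j" for j
    unfolding f0_def H0_def by (rule ham_formula[OF symG])
  have f1: "f1 x j = matvec ?m ?AT (f0 x) j" if j: "j < ?m" for j
  proof -
    have "f1 x j = matvec ?m (Jmat n x) (matvec ?m ?AG x) j"
      unfolding f1_def H1_def by (rule ham_formula[OF symAG])
    also have "\<dots> = matvec ?m (Jmat n x) (matvec ?m ?A (matvec ?m ?G x)) j"
      by (intro matvec_cong AGv)
    also have "\<dots> = matvec ?m ?AT (matvec ?m (Jmat n x) (matvec ?m ?G x)) j" by (rule JA[OF n j])
    also have "\<dots> = matvec ?m ?AT (f0 x) j" by (intro matvec_cong f0[symmetric])
    finally show ?thesis .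
  qed
  have c1: "matvec ?m (jacobi f0 x) (f1 x) i = matvec ?m (jacobi f1 x) (f0 x) i" if i: "i < ?m" for i
  proof -
    have "matvec ?m (jacobi f0 x) (f1 x) i = F0 (matvec ?m ?AT (f0 x)) i"
      unfolding F0_def by (rule matvec_cong) (rule f1)
    also have "\<dots> = F1 (f0 x) i" unfolding F0AT[OF i] F1A[OF i] ..
    finally show ?thesis unfolding F1_def .
  qed
  have c2: "matmul ?m (jacobi f0 x) (jacobi f1 x) i k = matmul ?m (jacobi f1 x) (jacobi f0 x) i k"
    if i: "i < ?m" and k: "k < ?m" for i k
  proof -
    let ?e = "\<lambda>l. if l = k then 1 else 0"
    have cF1: "jacobi f1 x j k = F1 ?e j" for j unfolding F1_def col_unit[OF k] ..
    have cF0: "jacobi f0 x j k = F0 ?e j" for j unfolding F0_def col_unit[OF k] ..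
    have "matmul ?m (jacobi f0 x) (jacobi f1 x) i k = F0 (F1 ?e) i"
      unfolding matmul_col F0_def cF1 ..
    also have "\<dots> = F0 (matvec ?m ?AT (F0 ?e)) i"
      by (rule F0cong) (rule F1A)
    also have "\<dots> = matvec ?m ?AT (F0 (F0 ?e)) i" by (rule F0AT[OF i])
    also have "\<dots> = F1 (F0 ?e) i" by (rule F1A[OF i, symmetric])
    also have "\<dots> = matmul ?m (jacobi f1 x) (jacobi f0 x) i k"
      unfolding matmul_col F1_def cF0 ..
    finally show ?thesis .
  qed
  show ?thesis using c1 c2 by blast
qed

end
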